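(* Let $I=(I_1,\dots,I_d)\in \mathcal I_d$ and $r,s\in [5]$ with $r\neq s$. Assume that the letter $r$ appears exactly once in each of $I_1,\ldots,I_c$ and does not appear in $I_{c+1},\ldots,I_{d}$. Then, for the adjoint action of $L_0$ on $U_-$, $x_s\partial _r. \omega_I=\sum_{b=1}^c \omega_{I^{b,s,r}}$, where $I^{b,s,r}$ is obtained from $I$ by replacing the letter $r$ in $I_b$ by $s$.
   Context: $L=E(5,10)$: even part the divergence-free formal vector fields in $x_1,\dots,x_5$, odd part the closed formal 2-forms; $d_{ij}=dx_i\wedge dx_j$ ($d_{ji}=-d_{ij}$, $d_{ii}=0$), and $[f d_{ij},g d_{kl}]=\varepsilon_{ijkl}fg\partial_{t_{ijkl}}$, where if $|\{i,j,k,l\}|=4$, $t_{ijkl}$ is the fifth element of $[5]$ and $\varepsilon_{ijkl}$ the sign of the permutation $(i,j,k,l,t_{ijkl})$, otherwise $\varepsilon_{ijkl}=0$. $L_0\cong\mathfrak{sl}_5$ is spanned by $x_i\partial_j$ ($i\ne j$) and $x_i\partial_i-x_j\partial_j$, and acts on $U_-=U(L_-)$, $L_-=\langle\partial_i\rangle\oplus\langle d_{ij}\rangle$, by the adjoint action $x.u=xu-ux$ (computed in $U(L)$). $\mathcal I_d$ is the set of $d$-tuples $I=(I_1,\dots,I_d)$ of ordered pairs $I_l=(i_l,j_l)\in[5]^2$; $d_I=d_{i_1j_1}\cdots d_{i_dj_d}$. For $k\neq l$ in $[d]$, $D_{\{k,l\}}(I)=\tfrac12(-1)^{k+l}\varepsilon_{i_kj_ki_lj_l}\partial_{t_{i_kj_ki_lj_l}}$.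 $\mathrm{SIF}_d$ is the set of sets $S$ of pairwise disjoint 2-element subsets of $[d]$; two disjoint pairs $\{k,l\},\{h,m\}$ cross if exactly one of $k,l$ is strictly between $h$ and $m$; $c(S)$ is the number of crossing pairs in $S$. $D_S(I)=\prod_{P\in S}D_P(I)$ ($D_\emptyset=1$), $C_S(I)$ is $I$ with all $I_j$, $j\in\bigcup S$, deleted, and $\omega_I=\sum_{S\in \mathrm{SIF}_d}(-1)^{c(S)}D_S(I)\,d_{C_S(I)}\in U_-$. *)

theory Defs
  imports "HOL-Library.Poly_Mapping" "HOL-Combinatorics.Permutations"
begin

text \<open>Generators of L_-: Pd i is the even element partial_i, Dd i j is the odd
element d_ij = dx_i wedge dx_j.  Indices live in [5] = {1..5}.\<close>

datatype gen = Pd nat | Dd nat nat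

type_synonym 'k fa = "gen list \<Rightarrow>\<^sub>0 'k"

definition fa_mult :: "'k::comm_ring_1 fa \<Rightarrow> 'k fa \<Rightarrow> 'k fa" where
  "fa_mult p q = (\<Sum>u\<in>Poly_Mapping.keys p. \<Sum>v\<in>Poly_Mapping.keys q.
       Poly_Mapping.single (u @ v) (Poly_Mapping.lookup p u * Poly_Mapping.lookup q v))"

definition fa_one :: "'k::comm_ring_1 fa" where
  "fa_one = Poly_Mapping.single [] 1"

definition fa_smul :: "'k::comm_ring_1 \<Rightarrow> 'k fa \<Rightarrow> 'k fa" where
  "fa_smul c p = Poly_Mapping.map (\<lambda>x. c * x) p"

definition fa_gen :: "gen \<Rightarrow> 'k::comm_ring_1 fa" where
  "fa_gen g = Poly_Mapping.single [g] 1"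

definition fa_word :: "gen list \<Rightarrow> 'k::comm_ring_1 fa" where
  "fa_word w = Poly_Mapping.single w 1"

definition five :: "nat set" where "five = {1..5}"

definition tcomp :: "nat \<Rightarrow> nat \<Rightarrow> nat \<Rightarrow> nat \<Rightarrow> nat" where
  "tcomp i j k l = (THE t. t \<in> five - {i, j, k, l})"

definition eps :: "nat \<Rightarrow> nat \<Rightarrow> nat \<Rightarrow> nat \<Rightarrow> int" where
  "eps i j k l = (if {i, j, k, l} \<subseteq> five \<and> card {i, j, k, l} = 4 then
     sign (\<lambda>n. if n = 1 then i else if n = 2 then j else if n = 3 then k
               else if n = 4 then l else if n = 5 then tcomp i j k l else n)
   else 0)"

text \<open>Defining relations of U(L_-): partial's are central (commute with everything),
  d_ij d_kl + d_kl d_ij = [d_ij, d_kl] = eps_{ijkl} partial_{t_{ijkl}},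
  d_ji = - d_ij, d_ii = 0.\<close>
definition rels :: "'k::comm_ring_1 fa set" where
  "rels =
     {fa_mult (fa_gen (Pd i)) (fa_gen g) - fa_mult (fa_gen g) (fa_gen (Pd i)) | i g.
        i \<in> five \<and> (case g of Pd j \<Rightarrow> j \<in> five | Dd j k \<Rightarrow> j \<in> five \<and> k \<in> five)}
   \<union> {fa_mult (fa_gen (Dd i j)) (fa_gen (Dd k l)) + fa_mult (fa_gen (Dd k l)) (fa_gen (Dd i j))
        - fa_smul (of_int (eps i j k l)) (fa_gen (Pd (tcomp i j k l))) | i j k l.
        i \<in> five \<and> j \<in> five \<and> k \<in> five \<and> l \<in> five}
   \<union> {fa_gen (Dd i j) + fa_gen (Dd j i) | i j. i \<in> five \<and> j \<in> five}
   \<union> {fa_gen (Dd i i) | i. i \<in> five}"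

inductive_set rel_ideal :: "'k::comm_ring_1 fa set" where
  zero: "0 \<in> rel_ideal"
| gen: "r \<in> rels \<Longrightarrow> fa_mult (fa_mult a r) b \<in> rel_ideal"
| add: "x \<in> rel_ideal \<Longrightarrow> y \<in> rel_ideal \<Longrightarrow> x + y \<in> rel_ideal"

definition ueq :: "'k::comm_ring_1 fa \<Rightarrow> 'k fa \<Rightarrow> bool" where
  "ueq p q \<longleftrightarrow> p - q \<in> rel_ideal"

text \<open>On generators: [x_s d_r, partial_i] = - delta_{is} partial_r and
  [x_s d_r, d_ij] = delta_{ri} d_{sj} + delta_{rj} d_{is}; extended to U_- as an
  (even) derivation, which is what u \<mapsto> xu - ux in U(L) restricts to.\<close>
definition act_gen :: "nat \<Rightarrow> nat \<Rightarrow> gen \<Rightarrow> 'k::comm_ring_1 fa" where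
  "act_gen s r g = (case g of
      Pd i \<Rightarrow> (if i = s then - fa_gen (Pd r) else 0)
    | Dd i j \<Rightarrow> (if i = r then fa_gen (Dd s j) else 0) + (if j = r then fa_gen (Dd i s) else 0))"

definition act_word :: "nat \<Rightarrow> nat \<Rightarrow> gen list \<Rightarrow> 'k::comm_ring_1 fa" where
  "act_word s r w = (\<Sum>k<length w.
      fa_mult (fa_mult (fa_word (take k w)) (act_gen s r (w ! k))) (fa_word (drop (Suc k) w)))"

definition act :: "nat \<Rightarrow> nat \<Rightarrow> 'k::comm_ring_1 fa \<Rightarrow> 'k fa" where
  "act s r p = (\<Sum>w\<in>Poly_Mapping.keys p. fa_smul (Poly_Mapping.lookup p w) (act_word s r w))"

text \<open>I \<in> I_d is a list of d ordered pairs; I_l is I ! (l - 1) for l \<in> [d].\<close>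

definition dI :: "(nat \<times> nat) list \<Rightarrow> 'k::comm_ring_1 fa" where
  "dI I = fa_word (map (\<lambda>(i, j). Dd i j) I)"

definition SIF :: "nat \<Rightarrow> nat set set set" where
  "SIF d = {S. (\<forall>P\<in>S. P \<subseteq> {1..d} \<and> card P = 2) \<and>
               (\<forall>P\<in>S. \<forall>Q\<in>S. P \<noteq> Q \<longrightarrow> P \<inter> Q = {})}"

definition crosses :: "nat set \<Rightarrow> nat set \<Rightarrow> bool" where
  "crosses P Q \<longleftrightarrow> card (P \<inter> {Min Q<..<Max Q}) = 1"

definition ncross :: "nat set set \<Rightarrow> nat" where
  "ncross S = card {{P, Q} | P Q. P \<in> S \<and> Q \<in> S \<and> P \<noteq> Q \<and> P \<inter> Q = {} \<and> crosses P Q}"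

text \<open>D_{k,l}(I) for k < l (the expression is symmetric in k, l).\<close>
definition Dpair :: "(nat \<times> nat) list \<Rightarrow> nat \<Rightarrow> nat \<Rightarrow> 'k::field fa" where
  "Dpair I k l = (let (ik, jk) = I ! (k - 1); (il, jl) = I ! (l - 1) in
     fa_smul ((1 / 2) * (-1) ^ (k + l) * of_int (eps ik jk il jl))
             (fa_gen (Pd (tcomp ik jk il jl))))"

text \<open>D_S(I) = product of the D_P(I), P \<in> S, taken in the order of the smaller
  elements of the pairs (the factors commute in U_-).\<close>
definition DS :: "(nat \<times> nat) list \<Rightarrow> nat set set \<Rightarrow> 'k::field fa" where
  "DS I S = foldr fa_mult
     (map (\<lambda>k. let P = (THE P. P \<in> S \<and> Min P = k) in Dpair I (Min P) (Max P))
          (sorted_list_of_set (Min ` S)))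
     fa_one"

definition CS :: "(nat \<times> nat) list \<Rightarrow> nat set set \<Rightarrow> (nat \<times> nat) list" where
  "CS I S = map (\<lambda>k. I ! (k - 1)) (filter (\<lambda>k. k \<notin> \<Union>S) [1..<Suc (length I)])"

definition omega :: "(nat \<times> nat) list \<Rightarrow> 'k::field fa" where
  "omega I = (\<Sum>S\<in>SIF (length I). fa_smul ((-1) ^ ncross S) (fa_mult (DS I S) (dI (CS I S))))"

definition repl :: "(nat \<times> nat) list \<Rightarrow> nat \<Rightarrow> nat \<Rightarrow> nat \<Rightarrow> (nat \<times> nat) list" where
  "repl I b s r = I[b - 1 := (let (i, j) = I ! (b - 1) in
       (if i = r then s else i, if j = r then s else j))]"

end

theory Submission
  imports Defs
begin


instantiation list :: (type) monoid_add
begin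
definition zero_list :: "'a list" where "zero_list = []"
definition plus_list :: "'a list \<Rightarrow> 'a list \<Rightarrow> 'a list" where "plus_list u v = u @ v"
instance by standard (auto simp: zero_list_def plus_list_def)
end

lemma pm_expand: "(p :: 'a \<Rightarrow>\<^sub>0 'b::comm_monoid_add) = (\<Sum>w\<in>Poly_Mapping.keys p. Poly_Mapping.single w (Poly_Mapping.lookup p w))"
proof (rule poly_mapping_eqI)
  fix k
  show "Poly_Mapping.lookup p k = Poly_Mapping.lookup (\<Sum>w\<in>Poly_Mapping.keys p. Poly_Mapping.single w (Poly_Mapping.lookup p w)) k"
    unfolding lookup_sum lookup_single
    by (cases "k \<in> Poly_Mapping.keys p") (auto simp: when_def in_keys_iff)
qed

lemma fa_mult_eq: "fa_mult p q = p * q"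
proof -
  have "p * q = (\<Sum>u\<in>Poly_Mapping.keys p. Poly_Mapping.single u (Poly_Mapping.lookup p u)) *
     (\<Sum>v\<in>Poly_Mapping.keys q. Poly_Mapping.single v (Poly_Mapping.lookup q v))"
    by (subst pm_expand[of p], subst pm_expand[of q]) (rule refl)
  also have "\<dots> = fa_mult p q"
    unfolding fa_mult_def sum_distrib_left sum_distrib_right mult_single plus_list_def
    by (rule sum.swap)
  finally show ?thesis by simp
qed

definition sc :: "'k::comm_ring_1 \<Rightarrow> 'k fa" where "sc c = Poly_Mapping.single [] c"

lemma fa_smul_eq: "fa_smul c p = sc c * p"
  unfolding fa_smul_def sc_def using mult_map_scale_conv_mult[of c p] by (simp add: zero_list_def)

lemma fa_one_eq: "fa_one = 1"
  unfolding fa_one_def by (metis single_one zero_list_def)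

lemma word_single: "Poly_Mapping.single w c = sc c * fa_word w"
  unfolding sc_def fa_word_def mult_single by (simp add: plus_list_def)

lemma word_append: "fa_word (u @ v) = fa_word u * (fa_word v :: 'k::comm_ring_1 fa)"
  unfolding fa_word_def mult_single by (simp add: plus_list_def)

lemma word_prod: "fa_word w = prod_list (map fa_gen w)"
proof (induction w)
  case Nil
  then show ?case by (simp add: fa_word_def, metis single_one zero_list_def)
next
  case (Cons a w)
  have "fa_word (a # w) = fa_word [a] * (fa_word w :: 'a fa)" using word_append[of "[a]" w] by simp
  then show ?case using Cons by (simp add: fa_gen_def fa_word_def)
qed

lemma sc_central: "sc c * p = p * (sc c :: 'k::comm_ring_1 fa)"
proof -
  have "sc c * p = (\<Sum>w\<in>Poly_Mapping.keys p. sc c * Poly_Mapping.single w (Poly_Mapping.lookup p w))"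
    by (subst pm_expand[of p]) (simp add: sum_distrib_left)
  also have "\<dots> = (\<Sum>w\<in>Poly_Mapping.keys p. Poly_Mapping.single w (Poly_Mapping.lookup p w) * sc c)"
    by (rule sum.cong) (auto simp: sc_def mult_single plus_list_def mult.commute)
  also have "\<dots> = p * sc c" by (subst (2) pm_expand[of p]) (simp add: sum_distrib_right)
  finally show ?thesis .
qed

lemma sc_mult: "sc a * sc b = sc (a * b)" by (simp add: sc_def mult_single plus_list_def)
lemma sc_add: "sc (a + b) = sc a + sc b" by (simp add: sc_def single_add)
lemma sc_0[simp]: "sc 0 = 0" by (simp add: sc_def)
lemma sc_1[simp]: "sc 1 = 1" by (simp add: sc_def flip: zero_list_def)
lemma sc_uminus: "sc (- a) = - sc a" by (simp add: sc_def single_uminus)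




lemma lookup_sc_mult: "Poly_Mapping.lookup (sc c * p) w = c * Poly_Mapping.lookup p w"
  unfolding fa_smul_eq[symmetric] fa_smul_def by transfer (auto simp: when_def)

lemma keys_sc_mult: "Poly_Mapping.keys (sc c * p) \<subseteq> Poly_Mapping.keys p"
  by (auto simp: in_keys_iff lookup_sc_mult)

lemma act_superset:
  assumes "finite W" "Poly_Mapping.keys p \<subseteq> W"
  shows "act s r p = (\<Sum>w\<in>W. sc (Poly_Mapping.lookup p w) * act_word s r w)"
  unfolding act_def fa_smul_eq
  by (rule sum.mono_neutral_left) (use assms in \<open>auto simp: in_keys_iff\<close>)

lemma act_add: "act s r (p + q) = act s r p + act s r (q :: 'k::comm_ring_1 fa)"
proof -
  let ?W = "Poly_Mapping.keys p \<union> Poly_Mapping.keys q"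
  have "Poly_Mapping.keys (p + q) \<subseteq> ?W" by (rule keys_add)
  then show ?thesis
    by (simp add: act_superset[of ?W] lookup_add sc_add distrib_right sum.distrib)
qed

lemma act_zero[simp]: "act s r 0 = 0" by (simp add: act_def)

lemma act_sc: "act s r (sc c * p) = sc c * act s r (p :: 'k::comm_ring_1 fa)"
  by (simp add: act_superset[OF _ keys_sc_mult] act_superset[of "Poly_Mapping.keys p"] lookup_sc_mult
       sc_mult[symmetric] sum_distrib_left mult.assoc)

lemma act_uminus: "act s r (- p) = - act s r (p :: 'k::comm_ring_1 fa)"
  using act_sc[of s r "-1" p] by (simp add: sc_uminus)

lemma act_diff: "act s r (p - q) = act s r p - act s r (q :: 'k::comm_ring_1 fa)"
  using act_add[of s r p "-q"] by (simp add: act_uminus)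

lemma act_sum: "act s r (\<Sum>i\<in>A. f i) = (\<Sum>i\<in>A. act s r (f i :: 'k::comm_ring_1 fa))"
  by (induction A rule: infinite_finite_induct) (auto simp: act_add)

lemma act_single: "act s r (Poly_Mapping.single w a) = sc a * (act_word s r (w :: gen list) :: 'k::comm_ring_1 fa)"
  by (subst act_superset[of "{w}"]) (auto simp: lookup_single)

lemma sum_lessThan_add: "(\<Sum>k<m+n. f k) = (\<Sum>k<m. f k) + (\<Sum>j<n. f (m + j))" for f :: "nat \<Rightarrow> 'a::comm_monoid_add"
  by (induction n) (auto simp: add.assoc)

lemma act_word_append:
  "act_word s r (u @ v) = act_word s r u * fa_word v + fa_word u * (act_word s r v :: 'k::comm_ring_1 fa)"
proof -
  have "act_word s r (u @ v) = (\<Sum>k<length u. fa_mult (fa_mult (fa_word (take k (u@v))) (act_gen s r ((u@v) ! k))) (fa_word (drop (Suc k) (u@v))))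
     + (\<Sum>j<length v. fa_mult (fa_mult (fa_word (take (length u + j) (u@v))) (act_gen s r ((u@v) ! (length u + j)))) (fa_word (drop (Suc (length u + j)) (u@v))))"
    unfolding act_word_def length_append by (rule sum_lessThan_add)
  also have "\<dots> = act_word s r u * fa_word v + fa_word u * (act_word s r v :: 'k::comm_ring_1 fa)"
    unfolding act_word_def fa_mult_eq sum_distrib_left sum_distrib_right
    by (intro arg_cong2[where f="(+)"] sum.cong refl)
       (auto simp: word_append nth_append mult.assoc)
  finally show ?thesis .
qed

lemma sc_mult2: "(sc a * x) * (sc b * y) = sc (a * b) * (x * (y :: 'k::comm_ring_1 fa))"
proof -
  have "(sc a * x) * (sc b * y) = sc a * (x * sc b) * y" by (simp add: mult.assoc)
  also have "\<dots> = sc a * (sc b * x) * y" by (simp add: sc_central)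
  also have "\<dots> = sc (a * b) * (x * y)" by (simp only: mult.assoc[symmetric] sc_mult)
  finally show ?thesis .
qed

lemma act_mult: "act s r (p * q) = act s r p * q + p * act s r (q :: 'k::comm_ring_1 fa)"
proof -
  let ?e = "\<lambda>p. (\<Sum>w\<in>Poly_Mapping.keys p. sc (Poly_Mapping.lookup p w) * fa_word w :: 'k fa)"
  have ep: "p = ?e p" and eq: "q = ?e q"
    using pm_expand[of p] pm_expand[of q] by (simp_all add: word_single)
  have "p * q = (\<Sum>u\<in>Poly_Mapping.keys p. \<Sum>v\<in>Poly_Mapping.keys q. (sc (Poly_Mapping.lookup p u) * fa_word u) * (sc (Poly_Mapping.lookup q v) * fa_word v))"
    apply (subst ep, subst eq)
    unfolding sum_distrib_left sum_distrib_right by (rule sum.swap)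
  also have "\<dots> = (\<Sum>u\<in>Poly_Mapping.keys p. \<Sum>v\<in>Poly_Mapping.keys q. sc (Poly_Mapping.lookup p u * Poly_Mapping.lookup q v) * fa_word (u @ v))"
    unfolding sc_mult2 word_append ..
  finally have pq: "p * q = \<dots>" .
  have "act s r (p * q) = (\<Sum>u\<in>Poly_Mapping.keys p. \<Sum>v\<in>Poly_Mapping.keys q. sc (Poly_Mapping.lookup p u * Poly_Mapping.lookup q v) * act_word s r (u @ v))"
    unfolding pq act_sum act_sc word_single[symmetric] act_single
    by (simp only: mult_1_right sc_1 flip: word_single)
  also have "\<dots> = (\<Sum>u\<in>Poly_Mapping.keys p. \<Sum>v\<in>Poly_Mapping.keys q. (sc (Poly_Mapping.lookup p u) * act_word s r u) * (sc (Poly_Mapping.lookup q v) * fa_word v))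
     + (\<Sum>u\<in>Poly_Mapping.keys p. \<Sum>v\<in>Poly_Mapping.keys q. (sc (Poly_Mapping.lookup p u) * fa_word u) * (sc (Poly_Mapping.lookup q v) * act_word s r v))"
    unfolding sum.distrib[symmetric] act_word_append sc_mult2 distrib_left ..
  also have "\<dots> = act s r p * q + p * act s r q"
  proof -
    have "act s r p * q = act s r p * ?e q" using eq by (rule arg_cong)
    moreover have "p * act s r q = ?e p * act s r q" using ep by (rule arg_cong)
    ultimately show ?thesis unfolding act_def fa_smul_eq sum_product by simp
  qed
  finally show ?thesis .
qed

lemma act_fa_gen: "act s r (fa_gen g) = act_gen s r g"
proof -
  have w0: "fa_word [] = (1 :: 'a fa)" unfolding fa_word_def by (metis single_one zero_list_def)
  show ?thesis unfolding fa_gen_def act_single act_word_def fa_mult_eq by (simp add: w0)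
qed

lemma act_one: "act s r (1 :: 'k::comm_ring_1 fa) = 0"
  using act_mult[of s r 1 1] by simp

lemma prod_list_update:
  "m < length ys \<Longrightarrow> prod_list (ys[m := x]) = prod_list (take m ys) * x * prod_list (drop (Suc m) ys)"
  for ys :: "'a::monoid_mult list"
  by (simp add: upd_conv_take_nth_drop mult.assoc)

lemma prod_list_update_sum:
  "m < length ys \<Longrightarrow> prod_list (ys[m := (\<Sum>j\<in>A. f j)]) = (\<Sum>j\<in>A. prod_list (ys[m := f j]))"
  for ys :: "'a::ring_1 list"
  by (simp add: prod_list_update sum_distrib_left sum_distrib_right)

lemma act_prod_list:
  "act s r (prod_list ys) = (\<Sum>m<length ys. prod_list (ys[m := act s r (ys ! m)]))"
  for ys :: "'k::comm_ring_1 fa list"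
proof (induction ys)
  case Nil then show ?case by (simp add: act_one)
next
  case (Cons y ys)
  show ?case
    unfolding length_Cons sum.lessThan_Suc_shift
    by (simp add: act_mult Cons sum_distrib_left)
qed




lemma five_eq: "five = {1,2,3,4,5::nat}" unfolding five_def by auto

lemma eps_nz: "eps a b c d \<noteq> 0 \<Longrightarrow> distinct [a,b,c,d] \<and> {a,b,c,d} \<subseteq> five"
proof -
  assume "eps a b c d \<noteq> 0"
  then have "{a,b,c,d} \<subseteq> five" "card (set [a,b,c,d]) = length [a,b,c,d]"
    unfolding eps_def by (auto split: if_splits)
  then show ?thesis using card_distinct by blast
qed

lemma tcomp_spec:
  assumes "distinct [a,b,c,d]" "{a,b,c,d} \<subseteq> five"
  shows "tcomp a b c d \<in> five" "tcomp a b c d \<notin> {a,b,c,d}"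
    "\<And>x. x \<in> five \<Longrightarrow> x \<notin> {a,b,c,d} \<Longrightarrow> x = tcomp a b c d"
proof -
  have c4: "card {a,b,c,d} = 4" using distinct_card[OF assms(1)] by simp
  have "card (five - {a,b,c,d}) = 1"
    using card_Diff_subset[of "{a,b,c,d}" five] assms(2) c4 by (simp add: five_eq)
  then obtain t where t: "five - {a,b,c,d} = {t}" by (rule card_1_singletonE)
  have tc: "tcomp a b c d = t" unfolding tcomp_def t by simp
  show "tcomp a b c d \<in> five" "tcomp a b c d \<notin> {a,b,c,d}" using t tc by auto
  show "\<And>x. x \<in> five \<Longrightarrow> x \<notin> {a,b,c,d} \<Longrightarrow> x = tcomp a b c d" using t tc by auto
qed

definition perm5 :: "nat \<Rightarrow> nat \<Rightarrow> nat \<Rightarrow> nat \<Rightarrow> nat \<Rightarrow> nat \<Rightarrow> nat" where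
  "perm5 i j k l t = (\<lambda>n. if n = 1 then i else if n = 2 then j else if n = 3 then k
               else if n = 4 then l else if n = 5 then t else n)"

lemma eps_eq: "distinct [a,b,c,d] \<Longrightarrow> {a,b,c,d} \<subseteq> five \<Longrightarrow> eps a b c d = sign (perm5 a b c d (tcomp a b c d))"
  unfolding eps_def perm5_def using distinct_card[of "[a,b,c,d]"] by simp

lemma perm5_perm:
  assumes "distinct [a,b,c,d]" "{a,b,c,d} \<subseteq> five"
  shows "permutation (perm5 a b c d (tcomp a b c d))"
proof -
  let ?t = "tcomp a b c d"
  let ?f = "perm5 a b c d ?t"
  note ts = tcomp_spec[OF assms]
  have f5: "set [1,2,3,4,5::nat] = five" by (simp add: five_eq)
  have mp: "map ?f [1,2,3,4,5] = [a,b,c,d,?t]" by (simp add: perm5_def)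
  have n: "a \<noteq> ?t" "b \<noteq> ?t" "c \<noteq> ?t" "d \<noteq> ?t" using ts(2) by (metis insertCI)+
  have "distinct [a,b,c,d,?t]" using assms(1) n by simp
  then have "distinct (map ?f [1,2,3,4,5])" by (simp only: mp)
  then have inj: "inj_on ?f five" unfolding distinct_map f5 by simp
  have "?f ` five = set [a,b,c,d,?t]" unfolding f5[symmetric] image_set mp ..
  also have "\<dots> = five"
  proof
    show "set [a,b,c,d,?t] \<subseteq> five" using ts(1) assms(2) by simp
    show "five \<subseteq> set [a,b,c,d,?t]"
    proof
      fix x assume "x \<in> five"
      then show "x \<in> set [a,b,c,d,?t]" using ts(3)[of x] by (cases "x \<in> {a,b,c,d}") auto
    qed
  qed
  finally have im: "?f ` five = five" .
  have st: "\<And>x. x \<notin> five \<Longrightarrow> ?f x = x"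
  proof -
    fix x :: nat assume "x \<notin> five"
    then have "x \<noteq> 1" "x \<noteq> 2" "x \<noteq> 3" "x \<noteq> 4" "x \<noteq> 5" by (auto simp: five_eq)
    then show "?f x = x" by (simp add: perm5_def)
  qed
  have "?f permutes five"
    by (rule bij_imp_permutes) (use im inj st in \<open>simp_all add: bij_betw_def\<close>)
  moreover have "finite five" by (simp add: five_def)
  ultimately show ?thesis using permutation_permutes by blast
qed

lemma eps_swap:
  assumes r: "r \<in> five" and s: "s \<in> five" and rs: "r \<noteq> s"
    and abcd: "{a,b,c,d} \<subseteq> five"
  defines "\<sigma> \<equiv> Transposition.transpose r s"
  shows "eps (\<sigma> a) (\<sigma> b) (\<sigma> c) (\<sigma> d) = - eps a b c d"
    and "distinct [a,b,c,d] \<Longrightarrow> tcomp (\<sigma> a) (\<sigma> b) (\<sigma> c) (\<sigma> d) = \<sigma> (tcomp a b c d)"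
proof -
  have inj\<sigma>: "inj \<sigma>" unfolding \<sigma>_def by (simp add: inj_on_def transpose_def) 
  have s5: "\<And>x. x \<in> five \<Longrightarrow> \<sigma> x \<in> five" using r s unfolding \<sigma>_def transpose_def by auto
  have abcd': "{\<sigma> a, \<sigma> b, \<sigma> c, \<sigma> d} \<subseteq> five" using abcd s5 by auto
  have dist_iff: "distinct [\<sigma> a, \<sigma> b, \<sigma> c, \<sigma> d] = distinct [a,b,c,d]"
    using inj\<sigma> by (auto dest: injD)
  show tc: "tcomp (\<sigma> a) (\<sigma> b) (\<sigma> c) (\<sigma> d) = \<sigma> (tcomp a b c d)" if dist: "distinct [a,b,c,d]"
  proof -
    note ts = tcomp_spec[OF dist abcd]
    have d': "distinct [\<sigma> a, \<sigma> b, \<sigma> c, \<sigma> d]" using dist dist_iff by simp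
    have "\<sigma> (tcomp a b c d) \<notin> {\<sigma> a, \<sigma> b, \<sigma> c, \<sigma> d}" using ts(2) inj\<sigma> by (auto dest: injD)
    then show ?thesis using tcomp_spec(3)[OF d' abcd'] s5 ts(1) by metis
  qed
  show "eps (\<sigma> a) (\<sigma> b) (\<sigma> c) (\<sigma> d) = - eps a b c d"
  proof (cases "distinct [a,b,c,d]")
    case False
    then have "eps a b c d = 0" "eps (\<sigma> a) (\<sigma> b) (\<sigma> c) (\<sigma> d) = 0"
      using eps_nz dist_iff by blast+
    then show ?thesis by simp
  next
    case True
    have d': "distinct [\<sigma> a, \<sigma> b, \<sigma> c, \<sigma> d]" using True dist_iff by simp
    have "perm5 (\<sigma> a) (\<sigma> b) (\<sigma> c) (\<sigma> d) (tcomp (\<sigma> a) (\<sigma> b) (\<sigma> c) (\<sigma> d))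
        = \<sigma> \<circ> perm5 a b c d (tcomp a b c d)"
    proof
      fix n
      show "perm5 (\<sigma> a) (\<sigma> b) (\<sigma> c) (\<sigma> d) (tcomp (\<sigma> a) (\<sigma> b) (\<sigma> c) (\<sigma> d)) n
        = (\<sigma> \<circ> perm5 a b c d (tcomp a b c d)) n"
      proof (cases "n \<in> five")
        case True
        then have "n = 1 \<or> n = 2 \<or> n = 3 \<or> n = 4 \<or> n = 5" by (simp add: five_eq)
        then show ?thesis by (elim disjE) (simp_all add: perm5_def tc[OF \<open>distinct [a,b,c,d]\<close>])
      next
        case False
        then have "n \<noteq> r" "n \<noteq> s" "n \<noteq> 1" "n \<noteq> 2" "n \<noteq> 3" "n \<noteq> 4" "n \<noteq> 5"
          using r s by (auto simp: five_eq)
        then show ?thesis by (simp add: perm5_def \<sigma>_def)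
      qed
    qed
    then have "eps (\<sigma> a) (\<sigma> b) (\<sigma> c) (\<sigma> d) = sign (\<sigma> \<circ> perm5 a b c d (tcomp a b c d))"
      using eps_eq[OF d' abcd'] by simp
    also have "\<dots> = sign \<sigma> * sign (perm5 a b c d (tcomp a b c d))"
      by (rule sign_compose) (auto simp: \<sigma>_def permutation_swap_id perm5_perm[OF True abcd])
    also have "\<dots> = - eps a b c d" using eps_eq[OF True abcd] rs by (simp add: \<sigma>_def sign_swap_id)
    finally show ?thesis .
  qed
qed




definition rho :: "nat \<Rightarrow> nat \<Rightarrow> nat \<Rightarrow> nat" where "rho r s x = (if x = r then s else x)"

definition pterm :: "'k::field \<Rightarrow> nat \<Rightarrow> nat \<Rightarrow> nat \<Rightarrow> nat \<Rightarrow> 'k fa" where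
  "pterm \<alpha> a b c d = sc (\<alpha> * of_int (eps a b c d)) * fa_gen (Pd (tcomp a b c d))"

lemma act_pterm: "act s r (pterm \<alpha> a b c d) =
   sc (\<alpha> * of_int (eps a b c d)) * (if tcomp a b c d = s then - fa_gen (Pd r) else 0)"
  unfolding pterm_def act_sc act_fa_gen by (simp add: act_gen_def)

lemma pterm_eps0: "eps a b c d = 0 \<Longrightarrow> pterm \<alpha> a b c d = 0"
  unfolding pterm_def by simp

lemma act_pterm_eps0: "eps a b c d = 0 \<Longrightarrow> act s r (pterm \<alpha> a b c d) = 0"
  unfolding act_pterm by simp

lemma nd_eps0: "\<not> distinct [a,b,c,d] \<Longrightarrow> eps a b c d = 0"
  using eps_nz by blast

lemma pair_one:
  assumes r: "r \<in> five" and s: "s \<in> five" and rs: "r \<noteq> s"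
    and abcd: "{a,b,c,d} \<subseteq> five" and rin: "r \<in> {a,b,c,d}"
  shows "act s r (pterm \<alpha> a b c d) = pterm \<alpha> (rho r s a) (rho r s b) (rho r s c) (rho r s d)"
proof (cases "distinct [a,b,c,d]")
  case False
  then have "\<not> distinct [rho r s a, rho r s b, rho r s c, rho r s d]" by auto
  then show ?thesis using False by (simp add: nd_eps0 pterm_eps0 act_pterm_eps0)
next
  case True
  note ts = tcomp_spec[OF True abcd]
  show ?thesis
  proof (cases "tcomp a b c d = s")
    case ts_s: True
    then have sn: "s \<notin> {a,b,c,d}" using ts(2) by simp
    let ?\<sigma> = "Transposition.transpose r s"
    have rr: "\<And>x. x \<in> {a,b,c,d} \<Longrightarrow> rho r s x = ?\<sigma> x"
      using sn by (auto simp: rho_def transpose_def)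
    then have eqs: "rho r s a = ?\<sigma> a" "rho r s b = ?\<sigma> b" "rho r s c = ?\<sigma> c" "rho r s d = ?\<sigma> d" by auto
    have e: "eps (?\<sigma> a) (?\<sigma> b) (?\<sigma> c) (?\<sigma> d) = - eps a b c d"
      by (rule eps_swap(1)[OF r s rs abcd])
    have t: "tcomp (?\<sigma> a) (?\<sigma> b) (?\<sigma> c) (?\<sigma> d) = r"
      using eps_swap(2)[OF r s rs abcd True] ts_s by simp
    show ?thesis unfolding act_pterm unfolding eqs pterm_def e t using ts_s
      by (simp add: sc_uminus)
  next
    case False
    have "s \<in> {a,b,c,d}" using ts(3)[OF s] False by auto
    then have "\<not> distinct [rho r s a, rho r s b, rho r s c, rho r s d]"
      using rin rs by (auto simp: rho_def)
    then show ?thesis using False by (simp add: nd_eps0 pterm_eps0 act_pterm)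
  qed
qed

lemma pair_zero:
  assumes r: "r \<in> five" and s: "s \<in> five" and rs: "r \<noteq> s"
    and abcd: "{a,b,c,d} \<subseteq> five" and rin: "r \<notin> {a,b,c,d}"
  shows "act s r (pterm \<alpha> a b c d) = 0"
proof (cases "distinct [a,b,c,d]")
  case False
  then show ?thesis by (simp add: nd_eps0 act_pterm_eps0)
next
  case True
  note ts = tcomp_spec[OF True abcd]
  have "tcomp a b c d \<noteq> s"
  proof
    assume "tcomp a b c d = s"
    then show False using ts(3)[OF r rin] rs by simp
  qed
  then show ?thesis by (simp add: act_pterm)
qed

lemma pair_two:
  assumes r: "r \<in> five" and s: "s \<in> five" and rs: "r \<noteq> s"
    and abcd: "{a,b,c,d} \<subseteq> five" and ab: "(a = r) \<noteq> (b = r)" and cd: "(c = r) \<noteq> (d = r)"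
  shows "act s r (pterm \<alpha> a b c d) = pterm \<alpha> (rho r s a) (rho r s b) c d + pterm \<alpha> a b (rho r s c) (rho r s d)"
proof -
  have "\<not> distinct [a,b,c,d]" using ab cd by auto
  then have l: "act s r (pterm \<alpha> a b c d) = 0" by (simp add: nd_eps0 act_pterm_eps0)
  show ?thesis
  proof (cases "s \<in> {a,b,c,d}")
    case True
    have "\<not> distinct [rho r s a, rho r s b, c, d]" "\<not> distinct [a, b, rho r s c, rho r s d]"
      using True ab cd rs by (auto simp: rho_def)
    then show ?thesis using l by (simp add: nd_eps0 pterm_eps0)
  next
    case False
    let ?\<sigma> = "Transposition.transpose r s"
    have in5: "{rho r s a, rho r s b, c, d} \<subseteq> five" using abcd s by (auto simp: rho_def)
    have eqs: "?\<sigma> (rho r s a) = a" "?\<sigma> (rho r s b) = b" "?\<sigma> c = rho r s c" "?\<sigma> d = rho r s d"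
      using False by (auto simp: rho_def transpose_def)
    have e: "eps a b (rho r s c) (rho r s d) = - eps (rho r s a) (rho r s b) c d"
      using eps_swap(1)[OF r s rs in5] unfolding eqs .
    show ?thesis
    proof (cases "distinct [rho r s a, rho r s b, c, d]")
      case True
      have t: "tcomp a b (rho r s c) (rho r s d) = ?\<sigma> (tcomp (rho r s a) (rho r s b) c d)"
        using eps_swap(2)[OF r s rs in5 True] unfolding eqs .
      have "r \<in> {rho r s a, rho r s b, c, d}" "s \<in> {rho r s a, rho r s b, c, d}"
        using ab cd by (auto simp: rho_def)
      then have "tcomp (rho r s a) (rho r s b) c d \<noteq> r" "tcomp (rho r s a) (rho r s b) c d \<noteq> s"
        using tcomp_spec(2)[OF True in5] by auto
      then have t2: "tcomp a b (rho r s c) (rho r s d) = tcomp (rho r s a) (rho r s b) c d"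
        unfolding t by simp
      show ?thesis unfolding l unfolding pterm_def e t2 by (simp add: sc_uminus)
    next
      case False
      then have "eps (rho r s a) (rho r s b) c d = 0" by (rule nd_eps0)
      then show ?thesis using l e by (simp add: pterm_eps0)
    qed
  qed
qed




lemma len_repl[simp]: "length (repl I b s r) = length I"
  by (simp add: repl_def)

lemma repl_nth_other: "j \<noteq> b - 1 \<Longrightarrow> repl I b s r ! j = I ! j"
  by (simp add: repl_def)

lemma repl_nth_same: "1 \<le> b \<Longrightarrow> b \<le> length I \<Longrightarrow>
   repl I b s r ! (b - 1) = (rho r s (fst (I ! (b - 1))), rho r s (snd (I ! (b - 1))))"
  by (simp add: repl_def rho_def split_beta)

lemma Dpair_pterm: "Dpair J k l = pterm (1 / 2 * (-1) ^ (k + l)) (fst (J ! (k - 1))) (snd (J ! (k - 1)))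
   (fst (J ! (l - 1))) (snd (J ! (l - 1)))"
  by (simp add: Dpair_def pterm_def split_beta Let_def fa_smul_eq)

context
  fixes I :: "(nat \<times> nat) list" and r s c :: nat
  assumes I5: "\<forall>p\<in>set I. fst p \<in> five \<and> snd p \<in> five"
    and r5: "r \<in> five" and s5: "s \<in> five" and rs: "r \<noteq> s"
    and cle: "c \<le> length I"
    and act1: "\<forall>b\<in>{1..c}. (fst (I ! (b - 1)) = r) \<noteq> (snd (I ! (b - 1)) = r)"
    and act0: "\<forall>b\<in>{c+1..length I}. fst (I ! (b - 1)) \<noteq> r \<and> snd (I ! (b - 1)) \<noteq> r"
begin

lemma I5': "k \<in> {1..length I} \<Longrightarrow> fst (I ! (k - 1)) \<in> five \<and> snd (I ! (k - 1)) \<in> five"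
proof -
  assume "k \<in> {1..length I}"
  then have "k - 1 < length I" by auto
  then have "I ! (k - 1) \<in> set I" by (rule nth_mem)
  then show ?thesis using I5 by blast
qed

lemma pairD:
  assumes kl: "k < l" and k: "k \<in> {1..length I}" and l: "l \<in> {1..length I}"
  shows "act s r (Dpair I k l :: 'k::field fa) = (\<Sum>b\<in>{k,l} \<inter> {1..c}. Dpair (repl I b s r) k l)"
proof -
  let ?\<alpha> = "1 / 2 * (-1) ^ (k + l) :: 'k"
  obtain a b where ab: "I ! (k - 1) = (a, b)" by fastforce
  obtain x y where xy: "I ! (l - 1) = (x, y)" by fastforce
  have in5: "{a,b,x,y} \<subseteq> five" using I5'[OF k] I5'[OF l] ab xy by auto
  have kl1: "k - 1 \<noteq> l - 1" using kl k by auto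
  have Jk: "Dpair (repl I k s r) k l = pterm ?\<alpha> (rho r s a) (rho r s b) x y"
    unfolding Dpair_pterm using repl_nth_same[of k I s r] repl_nth_other[of "l - 1" k I s r] kl1 k ab xy by simp
  have Jl: "Dpair (repl I l s r) k l = pterm ?\<alpha> a b (rho r s x) (rho r s y)"
    unfolding Dpair_pterm using repl_nth_same[of l I s r] repl_nth_other[of "k - 1" l I s r] kl1 l ab xy by simp
  have D: "Dpair I k l = pterm ?\<alpha> a b x y" unfolding Dpair_pterm ab xy by simp
  have rho_id: "\<And>z. z \<noteq> r \<Longrightarrow> rho r s z = z" by (simp add: rho_def)
  show ?thesis
  proof (cases "l \<le> c")
    case True
    then have "{k,l} \<inter> {1..c} = {k,l}" using k l kl by auto
    moreover have "(a = r) \<noteq> (b = r)" using bspec[OF act1, of k] True k l kl ab by auto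
    moreover have "(x = r) \<noteq> (y = r)" using bspec[OF act1, of l] True k l kl xy by auto
    ultimately show ?thesis using kl by (simp add: D Jk Jl pair_two[OF r5 s5 rs in5])
  next
    case lc: False
    have xyr: "x \<noteq> r \<and> y \<noteq> r" using bspec[OF act0, of l] lc l xy by auto
    show ?thesis
    proof (cases "k \<le> c")
      case True
      then have "{k,l} \<inter> {1..c} = {k}" using k l kl lc by auto
      moreover have "(a = r) \<noteq> (b = r)" using bspec[OF act1, of k] True k ab by auto
      ultimately have "r \<in> {a,b,x,y}" by auto
      note po = pair_one[OF r5 s5 rs in5 this, of ?\<alpha>]
      show ?thesis using \<open>{k,l} \<inter> {1..c} = {k}\<close> po xyr by (simp add: D Jk rho_id)
    next
      case False
      then have "{k,l} \<inter> {1..c} = {}" using kl by auto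
      moreover have "a \<noteq> r \<and> b \<noteq> r" using bspec[OF act0, of k] False k ab by auto
      ultimately show ?thesis using pair_zero[OF r5 s5 rs in5] xyr by (simp add: D)
    qed
  qed
qed

lemma SIF_finite: "S \<in> SIF d \<Longrightarrow> finite S"
proof -
  assume "S \<in> SIF d"
  then have "S \<subseteq> Pow {1..d}" by (auto simp: SIF_def)
  then show "finite S" by (rule finite_subset) simp
qed

lemma SIF_P: "S \<in> SIF d \<Longrightarrow> P \<in> S \<Longrightarrow> P \<subseteq> {1..d} \<and> card P = 2"
  by (auto simp: SIF_def)

lemma SIF_disj: "S \<in> SIF d \<Longrightarrow> P \<in> S \<Longrightarrow> Q \<in> S \<Longrightarrow> P \<noteq> Q \<Longrightarrow> P \<inter> Q = {}"
  by (auto simp: SIF_def)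

lemma pair_struct:
  assumes "P \<subseteq> {1..d}" "card P = 2"
  shows "Min P < Max P" "P = {Min P, Max P}" "Min P \<in> {1..d}" "Max P \<in> {1..d}" "Min P \<in> P"
proof -
  obtain x y where P: "P = {x, y}" "x \<noteq> y" using assms(2) card_2_iff by metis
  show "Min P < Max P" "P = {Min P, Max P}" using P by (auto simp: min_def max_def)
  show "Min P \<in> {1..d}" "Max P \<in> {1..d}" "Min P \<in> P" using P assms(1) by (auto simp: min_def max_def)
qed

lemma the_P:
  assumes S: "S \<in> SIF d" and P: "P \<in> S"
  shows "(THE Q. Q \<in> S \<and> Min Q = Min P) = P"
proof (rule the_equality)
  show "P \<in> S \<and> Min P = Min P" using P by simp
next
  fix Q assume Q: "Q \<in> S \<and> Min Q = Min P"
  show "Q = P"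
  proof (rule ccontr)
    assume "Q \<noteq> P"
    then have "Q \<inter> P = {}" using SIF_disj[OF S] Q P by blast
    moreover have "Min Q \<in> Q" "Min P \<in> P"
      using pair_struct(5) SIF_P[OF S] Q P by blast+
    ultimately show False using Q by auto
  qed
qed

lemma foldr_fa_mult: "foldr fa_mult xs fa_one = prod_list (xs :: 'k::comm_ring_1 fa list)"
  by (induction xs) (simp_all add: fa_mult_eq fa_one_eq)

definition GG :: "(nat \<times> nat) list \<Rightarrow> nat set \<Rightarrow> 'k::field fa" where
  "GG J P = Dpair J (Min P) (Max P)"

lemma DS_eq: "DS J S = prod_list (map (\<lambda>k. GG J (THE P. P \<in> S \<and> Min P = k)) (sorted_list_of_set (Min ` S)))"
  unfolding DS_def foldr_fa_mult GG_def Let_def ..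

lemma sum_nth_distinct: "distinct xs \<Longrightarrow> (\<Sum>m<length xs. H (xs ! m)) = sum H (set xs)"
  for H :: "'a \<Rightarrow> 'b::comm_monoid_add"
  by (simp add: sum_list_distinct_conv_sum_set[symmetric] sum_list_sum_nth atLeast0LessThan)

lemma GG_repl_other:
  assumes "P \<subseteq> {1..d}" "card P = 2" "b \<notin> P" "1 \<le> b"
  shows "GG (repl I b s r) P = GG I P"
proof -
  note ps = pair_struct[OF assms(1,2)]
  have "Min P \<noteq> b" "Max P \<noteq> b" using ps(2) assms(3) by auto
  then have "Min P - 1 \<noteq> b - 1" "Max P - 1 \<noteq> b - 1" using ps(3,4) assms(4) by auto
  then show ?thesis unfolding GG_def Dpair_pterm by (simp add: repl_nth_other)
qed

lemma act_DS:
  assumes S: "S \<in> SIF (length I)"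
  shows "act s r (DS I S :: 'k::field fa) = (\<Sum>b\<in>\<Union>S \<inter> {1..c}. DS (repl I b s r) S)"
proof -
  define mins where "mins = sorted_list_of_set (Min ` S)"
  define F where "F = (\<lambda>J k. GG J (THE P. P \<in> S \<and> Min P = k) :: 'k fa)"
  define H where "H = (\<lambda>k. \<Sum>b\<in>(THE P. P \<in> S \<and> Min P = k) \<inter> {1..c}. DS (repl I b s r) S :: 'k fa)"
  have fin: "finite S" by (rule SIF_finite[OF S])
  have dist: "distinct mins" and setm: "set mins = Min ` S" using fin by (auto simp: mins_def)
  have DSJ: "\<And>J. DS J S = prod_list (map (F J) mins)" unfolding DS_eq F_def mins_def ..
  have "act s r (DS I S) = (\<Sum>m<length mins. prod_list ((map (F I) mins)[m := act s r (map (F I) mins ! m)]))"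
    unfolding DSJ act_prod_list by simp
  also have "\<dots> = (\<Sum>m<length mins. H (mins ! m))"
  proof (rule sum.cong[OF refl])
    fix m assume m: "m \<in> {..<length mins}"
    then have "mins ! m \<in> Min ` S" using setm nth_mem by fastforce
    then obtain P where P: "P \<in> S" and k: "mins ! m = Min P" by blast
    note ps = pair_struct[OF conjunct1[OF SIF_P[OF S P]] conjunct2[OF SIF_P[OF S P]]]
    have theP: "(THE Q. Q \<in> S \<and> Min Q = mins ! m) = P" unfolding k by (rule the_P[OF S P])
    have FI: "map (F I) mins ! m = GG I P" using m theP by (simp add: F_def)
    have "act s r (GG I P) = (\<Sum>b\<in>{Min P, Max P} \<inter> {1..c}. GG (repl I b s r) P)"
      unfolding GG_def by (rule pairD[OF ps(1,3,4)])
    also have "\<dots> = (\<Sum>b\<in>P \<inter> {1..c}. GG (repl I b s r) P)" using ps(2) by simp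
    finally have aG: "act s r (GG I P) = \<dots>" .
    have upd: "(map (F I) mins)[m := GG (repl I b s r) P] = map (F (repl I b s r)) mins"
      if b: "b \<in> P" "1 \<le> b" for b
    proof (rule nth_equalityI)
      show "length ((map (F I) mins)[m := GG (repl I b s r) P]) = length (map (F (repl I b s r)) mins)" by simp
    next
      fix i assume i: "i < length ((map (F I) mins)[m := GG (repl I b s r) P])"
      show "(map (F I) mins)[m := GG (repl I b s r) P] ! i = map (F (repl I b s r)) mins ! i"
      proof (cases "i = m")
        case True
        then show ?thesis using i theP by (simp add: F_def)
      next
        case False
        have "mins ! i \<in> Min ` S" using i setm nth_mem by fastforce
        then obtain Q where Q: "Q \<in> S" and kq: "mins ! i = Min Q" by blast
        have "mins ! i \<noteq> mins ! m" using False i m dist by (simp add: nth_eq_iff_index_eq)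
        then have "Q \<noteq> P" using k kq by auto
        then have "b \<notin> Q" using SIF_disj[OF S Q P] b by auto
        then have gq: "GG (repl I b s r) Q = GG I Q"
          using GG_repl_other SIF_P[OF S Q] b(2) by blast
        have tq: "(THE R. R \<in> S \<and> Min R = mins ! i) = Q" unfolding kq by (rule the_P[OF S Q])
        show ?thesis using i False by (simp add: F_def gq tq)
      qed
    qed
    have "prod_list ((map (F I) mins)[m := act s r (map (F I) mins ! m)])
        = (\<Sum>b\<in>P \<inter> {1..c}. prod_list ((map (F I) mins)[m := GG (repl I b s r) P]))"
      unfolding FI aG using m by (simp add: prod_list_update_sum)
    also have "\<dots> = (\<Sum>b\<in>P \<inter> {1..c}. DS (repl I b s r) S)"
      by (rule sum.cong[OF refl]) (simp add: upd DSJ)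
    also have "\<dots> = H (mins ! m)" unfolding H_def theP ..
    finally show "prod_list ((map (F I) mins)[m := act s r (map (F I) mins ! m)]) = H (mins ! m)" .
  qed
  also have "\<dots> = sum H (Min ` S)" using sum_nth_distinct[OF dist] setm by simp
  also have "\<dots> = (\<Sum>P\<in>S. H (Min P))"
  proof (rule sum.reindex[unfolded comp_def])
    show "inj_on Min S"
    proof
      fix P Q assume "P \<in> S" "Q \<in> S" "Min P = Min Q"
      then show "P = Q" using the_P[OF S] by metis
    qed
  qed
  also have "\<dots> = (\<Sum>P\<in>S. \<Sum>b\<in>P \<inter> {1..c}. DS (repl I b s r) S)"
    by (rule sum.cong[OF refl]) (simp add: H_def the_P[OF S])
  also have "\<dots> = (\<Sum>b\<in>(\<Union>P\<in>S. P \<inter> {1..c}). DS (repl I b s r) S)"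
    by (rule sum.UNION_disjoint[symmetric]) (use fin SIF_disj[OF S] in auto)
  also have "(\<Union>P\<in>S. P \<inter> {1..c}) = \<Union>S \<inter> {1..c}" by auto
  finally show ?thesis .
qed

lemma dI_prod: "dI J = prod_list (map (\<lambda>p. fa_gen (Dd (fst p) (snd p))) J)"
  unfolding dI_def word_prod by (simp add: split_beta comp_def)

lemma act_dI:
  assumes S: "S \<in> SIF (length I)"
  shows "act s r (dI (CS I S) :: 'k::field fa) = (\<Sum>b\<in>{1..c} - \<Union>S. dI (CS (repl I b s r) S))"
proof -
  define ks where "ks = filter (\<lambda>k. k \<notin> \<Union>S) [1..<Suc (length I)]"
  define gg where "gg = (\<lambda>p. fa_gen (Dd (fst p) (snd p)) :: 'k fa)"
  define g where "g = (\<lambda>k. if k \<in> {1..c} then dI (CS (repl I k s r) S) else (0 :: 'k fa))"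
  have dist: "distinct ks" and setk: "set ks = {1..length I} - \<Union>S" by (auto simp: ks_def)
  have CSJ: "\<And>b. CS (repl I b s r) S = map (\<lambda>k. repl I b s r ! (k - 1)) ks"
    unfolding CS_def ks_def by simp
  have CSI: "CS I S = map (\<lambda>k. I ! (k - 1)) ks" unfolding CS_def ks_def ..
  let ?ys = "map (\<lambda>k. gg (I ! (k - 1))) ks"
  have "act s r (dI (CS I S)) = (\<Sum>m<length ks. prod_list (?ys[m := act s r (?ys ! m)]))"
    unfolding dI_prod CSI act_prod_list by (simp add: gg_def comp_def)
  also have "\<dots> = (\<Sum>m<length ks. g (ks ! m))"
  proof (rule sum.cong[OF refl])
    fix m assume m: "m \<in> {..<length ks}"
    define k where "k = ks ! m"
    have k: "k \<in> {1..length I}" "k \<notin> \<Union>S" using m setk nth_mem k_def by fastforce+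
    obtain a b where ab: "I ! (k - 1) = (a, b)" by fastforce
    have ysm: "?ys ! m = gg (a, b)" using m ab k_def by simp
    have aG: "act s r (gg (a, b)) = act_gen s r (Dd a b)" by (simp add: gg_def act_fa_gen)
    show "prod_list (?ys[m := act s r (?ys ! m)]) = g (ks ! m)"
    proof (cases "k \<le> c")
      case True
      have xor: "(a = r) \<noteq> (b = r)" using bspec[OF act1, of k] True k ab by auto
      have rk: "repl I k s r ! (k - 1) = (rho r s a, rho r s b)"
        using repl_nth_same[of k I s r] k ab by simp
      have aG2: "act s r (gg (a, b)) = gg (repl I k s r ! (k - 1))"
        unfolding aG rk using xor by (auto simp: act_gen_def gg_def rho_def)
      have upd: "?ys[m := gg (repl I k s r ! (k - 1))] = map (\<lambda>k'. gg (repl I k s r ! (k' - 1))) ks"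
      proof (rule nth_equalityI)
        fix i assume i: "i < length (?ys[m := gg (repl I k s r ! (k - 1))])"
        show "?ys[m := gg (repl I k s r ! (k - 1))] ! i = map (\<lambda>k'. gg (repl I k s r ! (k' - 1))) ks ! i"
        proof (cases "i = m")
          case True then show ?thesis using i k_def by simp
        next
          case False
          have "ks ! i \<noteq> k" using False i m dist k_def by (simp add: nth_eq_iff_index_eq)
          moreover have "ks ! i \<in> {1..length I}" using i setk nth_mem by fastforce
          ultimately have "ks ! i - 1 \<noteq> k - 1" using k by auto
          then show ?thesis using i False by (simp add: repl_nth_other)
        qed
      qed simp
      have "g (ks ! m) = dI (CS (repl I k s r) S)" using True k by (simp add: g_def k_def)
      also have "\<dots> = prod_list (map (\<lambda>k'. gg (repl I k s r ! (k' - 1))) ks)"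
        unfolding dI_prod CSJ by (simp add: gg_def comp_def)
      finally show ?thesis using ysm aG2 upd by simp
    next
      case False
      have "a \<noteq> r \<and> b \<noteq> r" using bspec[OF act0, of k] False k ab by auto
      then have "act s r (gg (a, b)) = 0" unfolding aG by (simp add: act_gen_def)
      moreover have "g (ks ! m) = 0" using False by (simp add: g_def k_def)
      ultimately show ?thesis using ysm m by (simp add: prod_list_update)
    qed
  qed
  also have "\<dots> = sum g ({1..length I} - \<Union>S)" using sum_nth_distinct[OF dist] setk by simp
  also have "\<dots> = sum (\<lambda>k. dI (CS (repl I k s r) S)) (({1..length I} - \<Union>S) \<inter> {1..c})"
    unfolding g_def by (rule sum.inter_restrict[symmetric]) simp
  also have "({1..length I} - \<Union>S) \<inter> {1..c} = {1..c} - \<Union>S" using cle by auto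
  finally show ?thesis .
qed

lemma DS_repl_notin:
  assumes S: "S \<in> SIF (length I)" and b: "b \<notin> \<Union>S" "1 \<le> b"
  shows "DS (repl I b s r) S = (DS I S :: 'k::field fa)"
  unfolding DS_eq
proof (rule arg_cong[where f=prod_list], rule map_cong[OF refl])
  fix k assume "k \<in> set (sorted_list_of_set (Min ` S))"
  then have "k \<in> Min ` S" using SIF_finite[OF S] by simp
  then obtain P where P: "P \<in> S" "k = Min P" by blast
  have "b \<notin> P" using b P by auto
  then show "GG (repl I b s r) (THE P. P \<in> S \<and> Min P = k) = (GG I (THE P. P \<in> S \<and> Min P = k) :: 'k fa)"
    unfolding P(2) the_P[OF S P(1)] using GG_repl_other SIF_P[OF S P(1)] b(2) by blast
qed

lemma CS_repl_in:
  assumes S: "S \<in> SIF (length I)" and b: "b \<in> \<Union>S"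
  shows "CS (repl I b s r) S = CS I S"
  unfolding CS_def len_repl
proof (rule map_cong[OF refl])
  fix k assume "k \<in> set (filter (\<lambda>k. k \<notin> \<Union>S) [1..<Suc (length I)])"
  then have "k \<noteq> b" "1 \<le> k" using b by auto
  moreover have "1 \<le> b" using b SIF_P[OF S] by fastforce
  ultimately have "k - 1 \<noteq> b - 1" by auto
  then show "repl I b s r ! (k - 1) = I ! (k - 1)" by (rule repl_nth_other)
qed

lemma act_term:
  assumes S: "S \<in> SIF (length I)"
  shows "act s r (DS I S * dI (CS I S) :: 'k::field fa) =
    (\<Sum>b\<in>{1..c}. DS (repl I b s r) S * dI (CS (repl I b s r) S))"
proof -
  have "act s r (DS I S * dI (CS I S) :: 'k fa) =
     (\<Sum>b\<in>\<Union>S \<inter> {1..c}. DS (repl I b s r) S) * dI (CS I S)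
     + DS I S * (\<Sum>b\<in>{1..c} - \<Union>S. dI (CS (repl I b s r) S))"
    unfolding act_mult act_DS[OF S] act_dI[OF S] ..
  also have "\<dots> = (\<Sum>b\<in>{1..c} \<inter> \<Union>S. DS (repl I b s r) S * dI (CS (repl I b s r) S))
     + (\<Sum>b\<in>{1..c} - \<Union>S. DS (repl I b s r) S * dI (CS (repl I b s r) S))"
    unfolding sum_distrib_left sum_distrib_right
    by (intro arg_cong2[where f="(+)"] sum.cong) (auto simp: CS_repl_in[OF S] DS_repl_notin[OF S] Int_commute)
  also have "\<dots> = (\<Sum>b\<in>{1..c}. DS (repl I b s r) S * dI (CS (repl I b s r) S))"
    by (rule sum.Int_Diff[symmetric]) simp
  finally show ?thesis .
qed

lemma main: "act s r (omega I :: 'k::field fa) = (\<Sum>b=1..c. omega (repl I b s r))"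
proof -
  have "act s r (omega I :: 'k fa) = (\<Sum>S\<in>SIF (length I). sc ((-1) ^ ncross S) * act s r (DS I S * dI (CS I S)))"
    unfolding omega_def fa_smul_eq fa_mult_eq act_sum act_sc ..
  also have "\<dots> = (\<Sum>S\<in>SIF (length I). \<Sum>b\<in>{1..c}. sc ((-1) ^ ncross S) * (DS (repl I b s r) S * dI (CS (repl I b s r) S)))"
    by (rule sum.cong[OF refl]) (simp add: act_term sum_distrib_left)
  also have "\<dots> = (\<Sum>b=1..c. omega (repl I b s r))"
    unfolding omega_def fa_smul_eq fa_mult_eq len_repl by (rule sum.swap)
  finally show ?thesis .
qed

end

theorem theorem5p8:
  fixes I :: "(nat \<times> nat) list" and r s c :: nat
  assumes "\<forall>p\<in>set I. fst p \<in> five \<and> snd p \<in> five"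
    and "r \<in> five" and "s \<in> five" and "r \<noteq> s"
    and "c \<le> length I"
    and "\<forall>b\<in>{1..c}. (fst (I ! (b - 1)) = r) \<noteq> (snd (I ! (b - 1)) = r)"
    and "\<forall>b\<in>{c+1..length I}. fst (I ! (b - 1)) \<noteq> r \<and> snd (I ! (b - 1)) \<noteq> r"
  shows "ueq (act s r (omega I :: 'k::field_char_0 fa)) (\<Sum>b=1..c. omega (repl I b s r))"
  unfolding ueq_def main[OF assms] by (simp add: rel_ideal.zero)


end
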